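(* Let $f_0,f_1$ be real polynomials with $f_1\neq0$ and $\deg f_1<\deg f_0$, and let $R=f_1/f_0$. Run the modified Euclidean algorithm $f_{k-1}=d_kf_k-f_{k+1}$ with $\deg f_{k+1}<\deg f_k$ for $k=1,\dots,m$, where $f_{m+1}=0$ (so $d_1,\dots,d_m$ are real polynomials and $$-R=-\cfrac{1}{d_1-\cfrac{1}{d_2-\cfrac{1}{\ddots-\cfrac{1}{d_m}}}}\ ).$$ Then $$\operatorname{Ind}_{\mathbb{P}\mathbb{R}}(R)=-\sum_{k=1}^m\operatorname{Ind}_\infty(d_k).$$
   Context: For a real rational function $R$ and a real pole $\omega_0$ of $R$ of odd order, $\operatorname{Ind}_{\omega_0}(R)=+1$ if $R(\omega_0-0)<0<R(\omega_0+0)$ and $-1$ if $R(\omega_0-0)>0>R(\omega_0+0)$; $\operatorname{Ind}_{-\infty}^{+\infty}(R)$ is the sum of these over all real poles of $R$ of odd order. Writing $R=f_1/f_0$, $R$ has a pole at $\infty$ of order $\deg f_1-\deg f_0$ when positive; if this order is odd, $\operatorname{Ind}_\infty(R)=+1$ if $R(+\infty)<0<R(-\infty)$ and $-1$ if $R(+\infty)>0>R(-\infty)$; otherwise $0$. $\operatorname{Ind}_{\mathbb{P}\mathbb{R}}(R)=\operatorname{Ind}_{-\infty}^{+\infty}(R)+\operatorname{Ind}_\infty(R)$. For a polynomial $d(\omega)=c\omega^\nu+\dots$: $\operatorname{Ind}_\infty(d)=-\operatorname{sign}c$ if $\nu$ is odd and $0$ if $\nu$ is even. *)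

theory Defs
  imports "HOL-Computational_Algebra.Polynomial" Complex_Main
begin

definition rat_fun :: "real poly \<Rightarrow> real poly \<Rightarrow> real \<Rightarrow> real" where
  "rat_fun p q = (\<lambda>t. poly p t / poly q t)"

definition pole_order :: "real poly \<Rightarrow> real poly \<Rightarrow> real \<Rightarrow> int" where
  "pole_order p q x = int (order x q) - int (order x p)"

definition ind_at :: "real poly \<Rightarrow> real poly \<Rightarrow> real \<Rightarrow> int" where
  "ind_at p q x =
     (if pole_order p q x > 0 \<and> odd (pole_order p q x) then
        (if (\<forall>\<^sub>F t in at_left x. rat_fun p q t < 0) \<and> (\<forall>\<^sub>F t in at_right x. rat_fun p q t > 0) then 1
         else if (\<forall>\<^sub>F t in at_left x. rat_fun p q t > 0) \<and> (\<forall>\<^sub>F t in at_right x. rat_fun p q t < 0) then -1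
         else 0)
      else 0)"

text \<open>Ind from -infinity to +infinity: sum over the real poles of odd order
  (all poles are among the roots of q; non-poles contribute 0).\<close>
definition ind_real :: "real poly \<Rightarrow> real poly \<Rightarrow> int" where
  "ind_real p q = (\<Sum>x\<in>{x. poly q x = 0}. ind_at p q x)"

definition ind_infty :: "real poly \<Rightarrow> real poly \<Rightarrow> int" where
  "ind_infty p q =
     (let n = int (degree p) - int (degree q) in
      if n > 0 \<and> odd n then
        (if (\<forall>\<^sub>F t in at_top. rat_fun p q t < 0) \<and> (\<forall>\<^sub>F t in at_bot. rat_fun p q t > 0) then 1
         else if (\<forall>\<^sub>F t in at_top. rat_fun p q t > 0) \<and> (\<forall>\<^sub>F t in at_bot. rat_fun p q t < 0) then -1
         else 0)
      else 0)"

definition ind_PR :: "real poly \<Rightarrow> real poly \<Rightarrow> int" where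
  "ind_PR p q = ind_real p q + ind_infty p q"

definition ind_infty_poly :: "real poly \<Rightarrow> int" where
  "ind_infty_poly d = ind_infty d 1"

end

theory Submission
  imports Defs
begin


definition isg :: "real \<Rightarrow> int" where
  "isg u = (if u > 0 then 1 else if u < 0 then -1 else 0)"

lemma isg_mult: "isg (u * v) = isg u * isg v"
  by (auto simp: isg_def mult_less_0_iff zero_less_mult_iff)

lemma isg_div: "isg (u / v) = isg u * isg v"
  by (auto simp: isg_def divide_less_0_iff zero_less_divide_iff)

lemma isg_neg: "isg (- u) = - isg u"
  by (auto simp: isg_def)

lemma isg_ne: "u \<noteq> 0 \<Longrightarrow> v \<noteq> 0 \<Longrightarrow> isg u \<noteq> isg v \<Longrightarrow> u * v < 0"
  by (cases "u > 0"; cases "v > 0") (auto simp: isg_def mult_less_0_iff)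

lemma EV_top:
  fixes p :: "real poly" assumes "p \<noteq> 0"
  shows "eventually (\<lambda>t. isg (poly p t) = isg (lead_coeff p)) at_top"
proof (cases "lead_coeff p > 0")
  case True
  then obtain n where n: "\<forall>x\<ge>n. poly p x \<ge> lead_coeff p" using poly_pinfty_gt_lc by blast
  show ?thesis unfolding eventually_at_top_linorder
    using n True by (intro exI[of _ n]) (auto simp: isg_def)
next
  case False
  then have "lead_coeff (-p) > 0" using assms by (simp add: less_le)
  then obtain n where n: "\<forall>x\<ge>n. poly (-p) x \<ge> lead_coeff (-p)" using poly_pinfty_gt_lc by blast
  show ?thesis unfolding eventually_at_top_linorder
    using n \<open>lead_coeff (-p) > 0\<close> by (intro exI[of _ n]) (auto simp: isg_def)
qed

lemma EV_bot:
  fixes p :: "real poly" assumes "p \<noteq> 0"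
  shows "eventually (\<lambda>t. isg (poly p t) = (-1)^degree p * isg (lead_coeff p)) at_bot"
proof -
  define q where "q = pcompose p [:0,-1:]"
  have lq: "lead_coeff q = lead_coeff p * (-1)^degree p"
    unfolding q_def by (subst lead_coeff_comp) auto
  have "q \<noteq> 0" using assms lq by auto
  from EV_top[OF this] obtain N where N: "\<forall>t\<ge>N. isg (poly q t) = isg (lead_coeff q)"
    unfolding eventually_at_top_linorder by blast
  have e: "isg (a * (-1)^n) = (-1)^n * isg a" for a :: real and n
    by (cases "even n") (auto simp: isg_mult isg_neg)
  show ?thesis unfolding eventually_at_bot_linorder
  proof (intro exI[of _ "-N"] allI impI)
    fix t :: real assume "t \<le> -N"
    then have "isg (poly q (-t)) = isg (lead_coeff q)" using N by auto
    moreover have "poly q (-t) = poly p t" by (simp add: q_def poly_pcompose)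
    ultimately show "isg (poly p t) = (-1)^degree p * isg (lead_coeff p)"
      by (simp add: lq e)
  qed
qed

lemma P1:
  fixes p :: "real poly" assumes "p \<noteq> 0" "\<forall>x\<ge>c. poly p x \<noteq> 0"
  shows "isg (poly p c) = isg (lead_coeff p)"
proof (rule ccontr)
  assume ne: "isg (poly p c) \<noteq> isg (lead_coeff p)"
  from EV_top[OF assms(1)] obtain N where N: "\<forall>t\<ge>N. isg (poly p t) = isg (lead_coeff p)"
    unfolding eventually_at_top_linorder by blast
  define t where "t = max N (c+1)"
  have t: "c < t" "isg (poly p t) \<noteq> isg (poly p c)" using N ne by (auto simp: t_def)
  have "poly p c \<noteq> 0" "poly p t \<noteq> 0" using assms t by auto
  then have "poly p c * poly p t < 0" using t(2) isg_ne by metis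
  from poly_IVT[OF t(1) this] assms(2) t(1) show False by auto
qed

lemma P2:
  fixes p :: "real poly" assumes "p \<noteq> 0" "\<forall>x\<le>c. poly p x \<noteq> 0"
  shows "isg (poly p c) = (-1)^degree p * isg (lead_coeff p)"
proof (rule ccontr)
  assume ne: "isg (poly p c) \<noteq> (-1)^degree p * isg (lead_coeff p)"
  from EV_bot[OF assms(1)] obtain N where N: "\<forall>t\<le>N. isg (poly p t) = (-1)^degree p * isg (lead_coeff p)"
    unfolding eventually_at_bot_linorder by blast
  define t where "t = min N (c-1)"
  have t: "t < c" "isg (poly p t) \<noteq> isg (poly p c)" using N ne by (auto simp: t_def)
  have "poly p c \<noteq> 0" "poly p t \<noteq> 0" using assms t by auto
  then have "poly p t * poly p c < 0" using t(2) isg_ne by metis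
  from poly_IVT[OF t(1) this] assms(2) t(1) show False by auto
qed

lemma LOC:
  fixes g :: "real poly" assumes "poly g x \<noteq> 0"
  shows "eventually (\<lambda>t. isg (poly ([:-x,1:]^a * g) t) = isg (poly g x)) (at_right x)"
    and "eventually (\<lambda>t. isg (poly ([:-x,1:]^a * g) t) = (-1)^a * isg (poly g x)) (at_left x)"
proof -
  have "((\<lambda>t. poly g t) \<longlongrightarrow> poly g x) (at x)"
    using poly_isCont[where p=g and x=x] unfolding isCont_def .
  then have ev: "eventually (\<lambda>t. isg (poly g t) = isg (poly g x)) (at x)"
  proof (cases "poly g x > 0")
    case True
    from order_tendstoD(1)[OF \<open>((\<lambda>t. poly g t) \<longlongrightarrow> poly g x) (at x)\<close> True]
    show ?thesis by eventually_elim (use True in \<open>auto simp: isg_def\<close>)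
  next
    case False
    then have "poly g x < 0" using assms by auto
    from order_tendstoD(2)[OF \<open>((\<lambda>t. poly g t) \<longlongrightarrow> poly g x) (at x)\<close> this]
    show ?thesis by eventually_elim (use \<open>poly g x < 0\<close> in \<open>auto simp: isg_def\<close>)
  qed
  have r: "eventually (\<lambda>t. isg (poly g t) = isg (poly g x)) (at_right x)"
    using ev eventually_at_split by blast
  have l: "eventually (\<lambda>t. isg (poly g t) = isg (poly g x)) (at_left x)"
    using ev eventually_at_split by blast
  have pw: "isg ((t - x)^a) = (if t > x then 1 else if t < x then (-1)^a else isg (0^a))" for t
    by (cases "even a") (auto simp: isg_def zero_less_power_eq power_less_zero_eq)
  show "eventually (\<lambda>t. isg (poly ([:-x,1:]^a * g) t) = isg (poly g x)) (at_right x)"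
    using r eventually_at_right_less[of x]
    by eventually_elim (simp add: isg_mult pw)
  show "eventually (\<lambda>t. isg (poly ([:-x,1:]^a * g) t) = (-1)^a * isg (poly g x)) (at_left x)"
  proof -
    have "eventually (\<lambda>t. t < x) (at_left x)"
      by (subst eventually_at_left[of "x-1"]) (auto intro!: exI[of _ "x-1"])
    with l show ?thesis by eventually_elim (simp add: isg_mult pw)
  qed
qed



lemma U_ord:
  fixes g :: "real poly"
  assumes "poly g x \<noteq> 0" shows "order x ([:-x,1:]^a * g) = a"
proof -
  have "g \<noteq> 0" using assms by auto
  then have "[:-x,1:]^a * g \<noteq> 0" by auto
  then show ?thesis by (subst order_mult) (auto simp: order_power_n_n order_0I[OF assms])
qed

lemma DEC:
  fixes r :: "real poly"
  assumes "r \<noteq> 0" shows "\<exists>g. r = [:-x,1:]^order x r * g \<and> poly g x \<noteq> 0"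
  using order_decomp[OF assms, of x] by (auto simp: poly_eq_0_iff_dvd)

lemma ind_at_0: "ind_at 0 q x = 0"
  by (simp add: ind_at_def rat_fun_def eventually_const_iff)

lemma ind_at_nonpos: "pole_order p q x \<le> 0 \<Longrightarrow> ind_at p q x = 0"
  by (simp add: ind_at_def)

lemma ind_at_formula:
  fixes g h :: "real poly"
  assumes p: "p = [:-x,1:]^a * g" and q: "q = [:-x,1:]^b * h"
    and g: "poly g x \<noteq> 0" and h: "poly h x \<noteq> 0"
  shows "ind_at p q x = (if a < b \<and> odd (b - a) then isg (poly g x * poly h x) else 0)"
proof -
  have op: "order x p = a" and oq: "order x q = b" using U_ord g h p q by auto
  have po: "pole_order p q x = int b - int a" by (simp add: pole_order_def op oq)
  define s where "s = isg (poly g x * poly h x)"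
  have "poly g x * poly h x \<noteq> 0" using g h by simp
  then have s: "s = 1 \<or> s = -1" unfolding s_def isg_def by auto
  have pq: "isg (rat_fun p q t) = isg (poly p t) * isg (poly q t)" for t
    by (simp add: rat_fun_def isg_div)
  have R: "eventually (\<lambda>t. isg (rat_fun p q t) = s) (at_right x)"
    using LOC(1)[OF g, of a] LOC(1)[OF h, of b]
    unfolding p[symmetric] q[symmetric] by eventually_elim (simp add: pq s_def isg_mult)
  have L: "eventually (\<lambda>t. isg (rat_fun p q t) = (-1)^(a+b) * s) (at_left x)"
    using LOC(2)[OF g, of a] LOC(2)[OF h, of b]
    unfolding p[symmetric] q[symmetric] by eventually_elim (simp add: pq s_def isg_mult power_add)
  show ?thesis
  proof (cases "a < b \<and> odd (b - a)")
    case False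
    then have "\<not> (pole_order p q x > 0 \<and> odd (pole_order p q x))"
    proof (cases "a < b")
      case True
      have "int b - int a = int (b - a)" using True by simp
      then show ?thesis unfolding po using True False by (simp only:) simp
    qed (simp add: po)
    then have "ind_at p q x = 0" unfolding ind_at_def by (simp only: if_False)
    then show ?thesis by (rule trans[OF _ if_not_P[OF False, symmetric]])
  next
    case True
    then have c: "pole_order p q x > 0 \<and> odd (pole_order p q x)"
    proof -
      have "int b - int a = int (b - a)" using True by simp
      then show ?thesis unfolding po using True by (simp only:) simp
    qed
    have ab: "a + b = 2*a + (b - a)" using True by simp
    have "odd (a + b)" unfolding ab using True by simp
    then have L': "eventually (\<lambda>t. isg (rat_fun p q t) = - s) (at_left x)" using L by simp
    show ?thesis
    proof (cases "s = 1")
      case True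
      have "eventually (\<lambda>t. rat_fun p q t > 0) (at_right x)"
        using R by eventually_elim (use True in \<open>auto simp: isg_def split: if_splits\<close>)
      moreover have "eventually (\<lambda>t. rat_fun p q t < 0) (at_left x)"
        using L' by eventually_elim (use True in \<open>auto simp: isg_def split: if_splits\<close>)
      ultimately have "ind_at p q x = 1" using c unfolding ind_at_def by simp
      then show ?thesis using \<open>a < b \<and> odd (b - a)\<close> True unfolding s_def by simp
    next
      case False
      then have s1: "s = -1" using s by auto
      have r: "eventually (\<lambda>t. rat_fun p q t < 0) (at_right x)"
        using R by eventually_elim (use s1 in \<open>auto simp: isg_def split: if_splits\<close>)
      have l: "eventually (\<lambda>t. rat_fun p q t > 0) (at_left x)"
        using L' by eventually_elim (use s1 in \<open>auto simp: isg_def split: if_splits\<close>)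
      have n: "\<not> eventually (\<lambda>t. rat_fun p q t > 0) (at_right x)"
      proof
        assume "eventually (\<lambda>t. rat_fun p q t > 0) (at_right x)"
        with r have "eventually (\<lambda>t. False) (at_right x)" by eventually_elim auto
        then show False by (simp add: eventually_const_iff)
      qed
      have "ind_at p q x = -1" using c l n r unfolding ind_at_def by simp
      then show ?thesis using \<open>a < b \<and> odd (b - a)\<close> s1 unfolding s_def by simp
    qed
  qed
qed



definition Jf :: "real poly \<Rightarrow> real \<Rightarrow> int" where
  "Jf r x = (if odd (order x r) then isg (poly (r div [:-x,1:]^order x r) x) else 0)"

lemma J_formula:
  fixes g :: "real poly"
  assumes r: "r = [:-x,1:]^a * g" and g: "poly g x \<noteq> 0"
  shows "Jf r x = (if odd a then isg (poly g x) else 0)"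
proof -
  have o: "order x r = a" using U_ord[OF g] r by simp
  have "r div [:-x,1:]^a = g" unfolding r by (rule nonzero_mult_div_cancel_left) simp
  then show ?thesis by (simp add: Jf_def o)
qed

lemma Jf_nonroot: "poly r x \<noteq> 0 \<Longrightarrow> Jf r x = 0"
  by (simp add: Jf_def order_0I)

lemma odd_diff_add: "(a::nat) < b \<Longrightarrow> odd (b - a) \<longleftrightarrow> odd (a + b)"
proof -
  assume "a < b"
  then have "a + b = 2*a + (b - a)" by simp
  then show ?thesis by auto
qed

lemma K:
  fixes p q :: "real poly"
  assumes "p \<noteq> 0" "q \<noteq> 0"
  shows "ind_at p q x + ind_at q p x = Jf (p*q) x"
proof -
  obtain g where g: "p = [:-x,1:]^order x p * g" "poly g x \<noteq> 0" using DEC[OF assms(1)] by blast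
  obtain h where h: "q = [:-x,1:]^order x q * h" "poly h x \<noteq> 0" using DEC[OF assms(2)] by blast
  define a where "a = order x p"
  define b where "b = order x q"
  have pq: "p * q = [:-x,1:]^(a+b) * (g*h)"
    apply (subst g(1), subst h(1)) by (simp add: a_def b_def power_add mult_ac)
  have gh: "poly (g*h) x \<noteq> 0" using g h by simp
  have 1: "ind_at p q x = (if a < b \<and> odd (b - a) then isg (poly g x * poly h x) else 0)"
    using ind_at_formula[OF g(1) h(1) g(2) h(2)] by (simp add: a_def b_def)
  have 2: "ind_at q p x = (if b < a \<and> odd (a - b) then isg (poly h x * poly g x) else 0)"
    using ind_at_formula[OF h(1) g(1) h(2) g(2)] by (simp add: a_def b_def)
  have 3: "Jf (p*q) x = (if odd (a+b) then isg (poly g x * poly h x) else 0)"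
    using J_formula[OF pq gh] by simp
  consider "a < b" | "b < a" | "a = b" by linarith
  then show ?thesis
  proof cases
    case 1
    then show ?thesis using \<open>ind_at p q x = _\<close> 2 3 odd_diff_add[OF 1] by simp
  next
    case 2
    then show ?thesis using 1 \<open>ind_at q p x = _\<close> 3 odd_diff_add[OF 2] by (simp add: mult.commute add.commute)
  next
    case 3
    then show ?thesis using 1 2 \<open>Jf (p*q) x = _\<close> by simp
  qed
qed

lemma V:
  fixes q d r :: "real poly"
  assumes q0: "q \<noteq> 0"
  shows "ind_at (d*q - r) q x = - ind_at r q x"
proof (cases "r = 0")
  case True
  show ?thesis
  proof (cases "d * q = 0")
    case True
    have "d*q - r = 0" using True \<open>r = 0\<close> by simp
    then have "ind_at (d*q - r) q x = 0" by (simp only: ind_at_0)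
    then show ?thesis using \<open>r = 0\<close> by (simp add: ind_at_0)
  next
    case False
    have "order x q \<le> order x (d*q)" using dvd_imp_order_le[OF False] by simp
    then have "ind_at (d*q) q x = 0" by (intro ind_at_nonpos) (simp add: pole_order_def)
    then show ?thesis using \<open>r = 0\<close> by (simp add: ind_at_0)
  qed
next
  case False
  obtain g where g: "r = [:-x,1:]^order x r * g" "poly g x \<noteq> 0" using DEC[OF False] by blast
  obtain h where h: "q = [:-x,1:]^order x q * h" "poly h x \<noteq> 0" using DEC[OF q0] by blast
  define a where "a = order x r"
  define b where "b = order x q"
  have 1: "ind_at r q x = (if a < b \<and> odd (b - a) then isg (poly g x * poly h x) else 0)"
    using ind_at_formula[OF g(1) h(1) g(2) h(2)] by (simp add: a_def b_def)
  show ?thesis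
  proof (cases "a < b")
    case True
    define k where "k = d * [:-x,1:]^(b-a) * h - g"
    have e: "d*q - r = [:-x,1:]^a * k"
    proof -
      have "q = [:-x,1:]^a * ([:-x,1:]^(b-a) * h)"
        using h(1) True unfolding b_def[symmetric] by (simp add: power_add[symmetric] mult.assoc[symmetric])
      then show ?thesis using g(1) unfolding k_def a_def[symmetric] by (simp add: algebra_simps)
    qed
    have pk: "poly k x = - poly g x" using True by (simp add: k_def)
    have "poly k x \<noteq> 0" using pk g(2) by simp
    from ind_at_formula[OF e h(1) this h(2)]
    have "ind_at (d*q - r) q x = (if a < b \<and> odd (b - a) then isg (poly k x * poly h x) else 0)"
      by (simp add: b_def)
    then show ?thesis using 1 pk by (simp add: isg_neg)
  next
    case False
    then have "ind_at r q x = 0" using 1 by simp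
    moreover have "ind_at (d*q - r) q x = 0"
    proof (cases "d*q - r = 0")
      case True then show ?thesis by (simp add: ind_at_0)
    next
      case nz: False
      have "[:-x,1:]^b dvd q" unfolding b_def by (rule order_1)
      moreover have "[:-x,1:]^b dvd r"
        using False order_1[of x r] unfolding a_def
        by (meson dvd_trans le_less_linear power_le_dvd dvd_refl)
      ultimately have "[:-x,1:]^b dvd d*q - r" by (simp add: dvd_diff)
      then have "b \<le> order x (d*q - r)" using nz order_divides by blast
      then show ?thesis by (intro ind_at_nonpos) (simp add: pole_order_def b_def)
    qed
    ultimately show ?thesis by simp
  qed
qed

lemma ind_real_superset:
  fixes p q :: "real poly"
  assumes "q \<noteq> 0" "finite S" "{x. poly q x = 0} \<subseteq> S"
  shows "ind_real p q = (\<Sum>x\<in>S. ind_at p q x)"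
  unfolding ind_real_def
proof (rule sum.mono_neutral_left[OF assms(2) assms(3)])
  show "\<forall>x\<in>S - {x. poly q x = 0}. ind_at p q x = 0"
  proof
    fix x assume "x \<in> S - {x. poly q x = 0}"
    then have "order x q = 0" by (simp add: order_0I)
    then show "ind_at p q x = 0" by (intro ind_at_nonpos) (simp add: pole_order_def)
  qed
qed



lemma TEL:
  fixes r :: "real poly"
  assumes "r \<noteq> 0"
  shows "2 * (\<Sum>x\<in>{x. poly r x = 0}. Jf r x) = isg (lead_coeff r) - (-1)^degree r * isg (lead_coeff r)"
  using assms
proof (induction "degree r" arbitrary: r rule: less_induct)
  case less
  define Z where "Z = {x. poly r x = 0}"
  have fZ: "finite Z" unfolding Z_def using poly_roots_finite[OF less.prems] .
  show ?case
  proof (cases "Z = {}")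
    case True
    have "isg (poly r 0) = isg (lead_coeff r)" using P1[OF less.prems] True unfolding Z_def by auto
    moreover have "isg (poly r 0) = (-1)^degree r * isg (lead_coeff r)" using P2[OF less.prems] True unfolding Z_def by auto
    ultimately show ?thesis using True unfolding Z_def[symmetric] by simp
  next
    case False
    define c where "c = Max Z"
    have cZ: "c \<in> Z" unfolding c_def using fZ False by (rule Max_in)
    have cmax: "\<And>x. x \<in> Z \<Longrightarrow> x \<le> c" unfolding c_def using fZ by (rule Max_ge)
    have "[:-c,1:] dvd r" using cZ unfolding Z_def by (simp add: poly_eq_0_iff_dvd)
    then obtain s where rs: "r = [:-c,1:] * s" by (elim dvdE)
    have s0: "s \<noteq> 0" using less.prems rs by auto
    have dr: "degree r = degree s + 1" unfolding rs by (subst degree_mult_eq) (use s0 in auto)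
    have lr: "lead_coeff r = lead_coeff s" unfolding rs lead_coeff_mult by simp
    define Zs where "Zs = {x. poly s x = 0}"
    have fZs: "finite Zs" unfolding Zs_def using poly_roots_finite[OF s0] .
    have IH: "2 * (\<Sum>x\<in>Zs. Jf s x) = isg (lead_coeff s) - (-1)^degree s * isg (lead_coeff s)"
      unfolding Zs_def using less.hyps[of s] dr s0 by simp
    have ZZ: "Z = insert c Zs" unfolding Z_def Zs_def rs by auto
    obtain g where g: "s = [:-c,1:]^order c s * g" "poly g c \<noteq> 0" using DEC[OF s0] by blast
    define a where "a = order c s"
    have r2: "r = [:-c,1:]^(a+1) * g" unfolding rs a_def by (subst g(1)) (simp add: mult_ac)
    have Jrc: "Jf r c = (if odd (a+1) then isg (poly g c) else 0)" using J_formula[OF r2 g(2)] .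
    have Jsc: "Jf s c = (if odd a then isg (poly g c) else 0)" using J_formula[OF g(1) g(2)] by (simp add: a_def)
    have Jc: "Jf r c + Jf s c = isg (poly g c)" using Jrc Jsc by auto
    have g0: "g \<noteq> 0" using g(2) by auto
    have "\<forall>x\<ge>c. poly g x \<noteq> 0"
    proof (intro allI impI)
      fix x assume "c \<le> x"
      show "poly g x \<noteq> 0"
      proof (cases "x = c")
        case True then show ?thesis using g(2) by simp
      next
        case False
        show ?thesis
        proof
          assume "poly g x = 0"
          then have "poly s x = 0" by (subst g(1)) simp
          then have "x \<in> Z" unfolding ZZ Zs_def by simp
          then show False using cmax \<open>c \<le> x\<close> False by force
        qed
      qed
    qed
    from P1[OF g0 this] have "isg (poly g c) = isg (lead_coeff g)" .
    moreover have "lead_coeff s = lead_coeff g"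
    proof -
      have "lead_coeff ([:-c,1:]^order c s * g) = lead_coeff g" by (simp add: lead_coeff_mult lead_coeff_power)
      with arg_cong[of _ _ lead_coeff, OF g(1)] show ?thesis by simp
    qed
    ultimately have Jc': "Jf r c + Jf s c = isg (lead_coeff s)" using Jc by simp
    have Jx: "Jf r x = - Jf s x" if "x \<in> Zs - {c}" for x
    proof -
      have "x \<in> Z" using that unfolding ZZ by auto
      then have "x < c" using cmax that by force
      obtain h where h: "s = [:-x,1:]^order x s * h" "poly h x \<noteq> 0" using DEC[OF s0] by blast
      have r3: "r = [:-x,1:]^order x s * ([:-c,1:] * h)" unfolding rs using h(1) by (metis mult.left_commute)
      have ph: "poly ([:-c,1:] * h) x = (x - c) * poly h x" by (simp add: algebra_simps)
      have "poly ([:-c,1:] * h) x \<noteq> 0" using ph h(2) \<open>x < c\<close> by simp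
      from J_formula[OF r3 this] J_formula[OF h]
      show ?thesis using \<open>x < c\<close> by (simp add: ph isg_mult isg_def)
    qed
    have S1: "(\<Sum>x\<in>Z. Jf r x) = Jf r c + (\<Sum>x\<in>Zs - {c}. Jf r x)"
      unfolding ZZ using fZs by (rule sum.insert_remove)
    have S2: "(\<Sum>x\<in>Zs. Jf s x) = Jf s c + (\<Sum>x\<in>Zs - {c}. Jf s x)"
    proof (cases "c \<in> Zs")
      case True then show ?thesis using fZs by (simp add: sum.remove)
    next
      case False
      then have "Jf s c = 0" by (intro Jf_nonroot) (simp add: Zs_def)
      then show ?thesis using False by simp
    qed
    have S3: "(\<Sum>x\<in>Zs - {c}. Jf r x) = - (\<Sum>x\<in>Zs - {c}. Jf s x)"
      using Jx by (simp add: sum_negf)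
    have "(\<Sum>x\<in>Z. Jf r x) = isg (lead_coeff s) - (\<Sum>x\<in>Zs. Jf s x)"
      using S1 S2 S3 Jc' by simp
    then show ?thesis unfolding Z_def[symmetric] using IH dr lr by simp
  qed
qed



lemma IIP:
  fixes d :: "real poly" assumes d0: "d \<noteq> 0"
  shows "ind_infty_poly d = (if odd (degree d) then - isg (lead_coeff d) else 0)"
proof (cases "odd (degree d)")
  case False
  then show ?thesis by (simp add: ind_infty_poly_def ind_infty_def Let_def)
next
  case True
  have rf: "rat_fun d 1 = poly d" by (simp add: rat_fun_def fun_eq_iff)
  have c: "int (degree d) - int (degree (1::real poly)) > 0 \<and> odd (int (degree d) - int (degree (1::real poly)))"
    using True by (simp add: odd_pos)
  have T: "eventually (\<lambda>t. isg (poly d t) = isg (lead_coeff d)) at_top" using EV_top[OF d0] .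
  have B: "eventually (\<lambda>t. isg (poly d t) = - isg (lead_coeff d)) at_bot" using EV_bot[OF d0] True by simp
  have lc: "lead_coeff d \<noteq> 0" using d0 by simp
  show ?thesis
  proof (cases "lead_coeff d > 0")
    case pos: True
    have t: "eventually (\<lambda>t. poly d t > 0) at_top" using T by eventually_elim (use pos in \<open>auto simp: isg_def split: if_splits\<close>)
    have b: "eventually (\<lambda>t. poly d t < 0) at_bot" using B by eventually_elim (use pos in \<open>auto simp: isg_def split: if_splits\<close>)
    have n: "\<not> eventually (\<lambda>t. poly d t < 0) at_top"
    proof
      assume "eventually (\<lambda>t. poly d t < 0) at_top"
      with t have "eventually (\<lambda>t. False) (at_top::real filter)" by eventually_elim auto
      then show False by (simp add: eventually_const_iff)
    qed
    have "ind_infty_poly d = -1" unfolding ind_infty_poly_def ind_infty_def Let_def rf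
      using c t b n by simp
    then show ?thesis using True pos by (simp add: isg_def)
  next
    case neg: False
    then have neg': "lead_coeff d < 0" using lc by linarith
    have t: "eventually (\<lambda>t. poly d t < 0) at_top" using T by eventually_elim (use neg' in \<open>auto simp: isg_def split: if_splits\<close>)
    have b: "eventually (\<lambda>t. poly d t > 0) at_bot" using B by eventually_elim (use neg' in \<open>auto simp: isg_def split: if_splits\<close>)
    have "ind_infty_poly d = 1" unfolding ind_infty_poly_def ind_infty_def Let_def rf
      using c t b by simp
    then show ?thesis using True neg' by (simp add: isg_def)
  qed
qed

lemma STEP:
  fixes p q d r :: "real poly"
  assumes p0: "p \<noteq> 0" and q0: "q \<noteq> 0" and qe: "q = d*p - r"
    and rd: "r = 0 \<or> degree r < degree p" and pq: "degree p < degree q"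
  shows "ind_real p q = - ind_infty_poly d + ind_real r p"
proof -
  define S where "S = {x. poly (p*q) x = 0}"
  have pq0: "p * q \<noteq> 0" using p0 q0 by simp
  have fS: "finite S" unfolding S_def by (rule poly_roots_finite[OF pq0])
  have 1: "ind_real p q = (\<Sum>x\<in>S. ind_at p q x)"
    by (rule ind_real_superset[OF q0 fS]) (auto simp: S_def)
  have 2: "ind_real r p = (\<Sum>x\<in>S. ind_at r p x)"
    by (rule ind_real_superset[OF p0 fS]) (auto simp: S_def)
  have 3: "ind_at p q x - ind_at r p x = Jf (p*q) x" for x
  proof -
    have "ind_at q p x = - ind_at r p x" unfolding qe by (rule V[OF p0])
    with K[OF p0 q0, of x] show ?thesis by simp
  qed
  have W: "ind_real p q - ind_real r p = (\<Sum>x\<in>S. Jf (p*q) x)"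
    unfolding 1 2 sum_subtractf[symmetric] using 3 by simp
  have d0: "d \<noteq> 0"
  proof
    assume "d = 0"
    then have "q = - r" using qe by simp
    then show False using rd pq q0 by auto
  qed
  have ddp: "degree (d*p) = degree d + degree p" using d0 p0 by (simp add: degree_mult_eq)
  have lq: "lead_coeff q = lead_coeff d * lead_coeff p \<and> degree q = degree d + degree p"
  proof (cases "r = 0")
    case True then show ?thesis using qe ddp lead_coeff_mult[of d p] by simp
  next
    case False
    then have "degree (-r) < degree (d*p)" using rd ddp by simp
    then have "lead_coeff (-r + d*p) = lead_coeff (d*p)" "degree (-r + d*p) = degree (d*p)"
      using lead_coeff_add_le[of "-r" "d*p"] degree_add_eq_right[of "-r" "d*p"] by auto
    then have "lead_coeff (d*p - r) = lead_coeff (d*p)" "degree (d*p - r) = degree (d*p)"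
      by (simp_all add: add.commute)
    then show ?thesis using qe ddp lead_coeff_mult[of d p] by simp
  qed
  have "2 * (\<Sum>x\<in>S. Jf (p*q) x) = isg (lead_coeff (p*q)) - (-1)^degree (p*q) * isg (lead_coeff (p*q))"
    unfolding S_def by (rule TEL[OF pq0])
  moreover have "isg (lead_coeff (p*q)) = isg (lead_coeff d)"
  proof -
    have "lead_coeff (p*q) = lead_coeff d * (lead_coeff p)^2"
      by (simp only: lead_coeff_mult conjunct1[OF lq] power2_eq_square mult_ac)
    moreover have "(lead_coeff p)^2 > 0" using p0 by simp
    then have "isg ((lead_coeff p)^2) = 1" by (simp add: isg_def)
    ultimately show ?thesis by (simp add: isg_mult)
  qed
  moreover have "(-1::int)^degree (p*q) = (-1)^degree d"
  proof -
    have "degree (p*q) = 2 * degree p + degree d" using lq p0 q0 by (simp add: degree_mult_eq)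
    then show ?thesis by (simp add: power_add power_mult)
  qed
  ultimately have "2 * (ind_real p q - ind_real r p) = isg (lead_coeff d) - (-1)^degree d * isg (lead_coeff d)"
    using W by simp
  then show ?thesis using IIP[OF d0] by (cases "even (degree d)") auto
qed

theorem theorem60:
  fixes f :: "nat \<Rightarrow> real poly" and d :: "nat \<Rightarrow> real poly" and m :: nat
  assumes f1_nz: "f 1 \<noteq> 0"
    and deg: "degree (f 1) < degree (f 0)"
    and nz: "\<forall>k\<in>{1..m}. f k \<noteq> 0"
    and step: "\<forall>k\<in>{1..m}. f (k - 1) = d k * f k - f (k + 1)
                  \<and> (f (k + 1) = 0 \<or> degree (f (k + 1)) < degree (f k))"
    and last: "f (m + 1) = 0"
  shows "ind_PR (f 1) (f 0) = - (\<Sum>k=1..m. ind_infty_poly (d k))"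
proof -
  define I where "I k = ind_real (f k) (f (k - 1))" for k
  have f00: "f 0 \<noteq> 0" using deg by auto
  have rec: "I k = - ind_infty_poly (d k) + I (k + 1)" if k: "k \<in> {1..m}" for k
  proof -
    have fk: "f k \<noteq> 0" using nz k by auto
    have fk1: "f (k - 1) \<noteq> 0 \<and> degree (f k) < degree (f (k - 1))"
    proof (cases "k = 1")
      case True then show ?thesis using f00 deg by simp
    next
      case False
      then have "k - 1 \<in> {1..m}" using k by auto
      then have A: "f (k - 1) \<noteq> 0" "f ((k-1)+1) = 0 \<or> degree (f ((k-1)+1)) < degree (f (k - 1))"
        using nz step by blast+
      have "(k-1)+1 = k" using k by auto
      then show ?thesis using fk A by auto
    qed
    have s: "f (k - 1) = d k * f k - f (k + 1)" "f (k + 1) = 0 \<or> degree (f (k + 1)) < degree (f k)"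
      using step k by auto
    have "ind_real (f k) (f (k-1)) = - ind_infty_poly (d k) + ind_real (f (k+1)) (f k)"
      using STEP[OF fk conjunct1[OF fk1] s(1) s(2) conjunct2[OF fk1]] .
    then show ?thesis unfolding I_def by simp
  qed
  have m1: "m \<ge> 1" using f1_nz last by (cases m) auto
  have Im: "I (m + 1) = 0" unfolding I_def ind_real_def using last by (simp add: ind_at_0)
  have gen: "j \<le> m \<Longrightarrow> I 1 = - (\<Sum>k=1..j. ind_infty_poly (d k)) + I (j + 1)" for j
  proof (induction j)
    case 0 then show ?case by simp
  next
    case (Suc j)
    then have "I (j+1) = - ind_infty_poly (d (j+1)) + I (j + 2)" using rec[of "j+1"] by simp
    then show ?case using Suc by simp
  qed
  have "ind_infty (f 1) (f 0) = 0" using deg by (simp add: ind_infty_def Let_def)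
  then show ?thesis unfolding ind_PR_def using gen[of m] Im by (simp add: I_def)
qed

end
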